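(* In the changepoint model with negative-binomial segment lengths described in the context, for $0<j\le n$ and every integer $i\ge n-j$, $$P(S=i,\,C_n=j\mid Y_{1:n}=y_{1:n})=\frac{\tilde c_{jn}\,\mathrm{NB}(i;q,r)}{\sum_{\ell=n-j}^\infty\mathrm{NB}(\ell;q,r)}.$$
   Context: Let $\mathrm{NB}(\ell;q,r)=\binom{r-1+\ell}{\ell}q^r(1-q)^\ell$ ($\ell=0,1,2,\dots$) be the negative binomial probability mass function with success probability $q\in(0,1)$ and number of successes $r\in\mathbb N_{\ge1}$. Model: fix $n\ge1$ and data $y_1,\dots,y_n$; $(\mathbb X,\mathcal X)$, $(\mathbb Y,\mathcal Y)$ standard Borel, $\psi$ $\sigma$-finite on $\mathbb Y$, $\mathcal J$ a probability measure on $\mathbb X$. Let $q_{0i}\in[0,1]$ ($i\ge1$) be arbitrary and for $0<j<i$ let $q_{ji}=\sum_{\ell\ge i-j}\mathrm{NB}(\ell;q,r)/\sum_{\ell\ge i-j-1}\mathrm{NB}(\ell;q,r)$. The changepoint process $(C_i)_{i\ge1}$, $C_i\in\{0,\dots,i\}$, is a Markov chain with $P(C_1=0)=q_{01}$, $P(C_1=1)=1-q_{01}$, and for $i\ge2$: $P(C_i=j\mid C_{i-1}=j)=q_{ji}$, $P(C_i=i\mid C_{i-1}=j)=1-q_{ji}$; it is defined for all $i\ge1$ (beyond $n$). For $i=1,\dots,n$: $X_1\sim\mathcal J$; for $i\ge2$, $X_i\sim\mathcal J$ (fresh) if $C_i=i$ and $X_i=X_{i-1}$ if $C_i<i$; $Y_i$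 depends on all other variables only through $X_i$ with density $p(Y_i=y\mid X_i=x)$ w.r.t. $\psi$; given $C_n$, the future chain $(C_k)_{k>n}$ is independent of $X_{1:n},Y_{1:n},C_{1:n-1}$. Assume $\int\prod_{\ell=j}^ip(Y_\ell=y_\ell\mid X_\ell=x)\mathcal J(dx)>0$ for $0<j\le i\le n$. Let $\tau=\min\{k>n:C_k=k\}$ and $S=\tau-1-C_n$ (the length, counted as end minus start, of the segment containing $n$). Let $\tilde c_{jn}=P(C_n=j\mid Y_{1:n}=y_{1:n})$. *)

theory Defs
  imports "HOL-Probability.Probability"
begin

definition NB :: "real \<Rightarrow> nat \<Rightarrow> nat \<Rightarrow> real" where
  "NB q r l = real ((r - 1 + l) choose l) * q ^ r * (1 - q) ^ l"

definition NBtail :: "real \<Rightarrow> nat \<Rightarrow> nat \<Rightarrow> real" where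
  "NBtail q r k = (\<Sum>l. NB q r (l + k))"

definition qtr :: "(nat \<Rightarrow> real) \<Rightarrow> real \<Rightarrow> nat \<Rightarrow> nat \<Rightarrow> nat \<Rightarrow> real" where
  "qtr q0 q r j i = (if j = 0 then q0 i else NBtail q r (i - j) / NBtail q r (i - j - 1))"

text \<open>Law of the changepoint chain: P(C_1 = c1) and P(C_i = c' | C_{i-1} = j).\<close>
definition cp_init :: "(nat \<Rightarrow> real) \<Rightarrow> nat \<Rightarrow> real" where
  "cp_init q0 c1 = (if c1 = 0 then q0 1 else if c1 = 1 then 1 - q0 1 else 0)"

definition cp_step :: "(nat \<Rightarrow> real) \<Rightarrow> real \<Rightarrow> nat \<Rightarrow> nat \<Rightarrow> nat \<Rightarrow> nat \<Rightarrow> real" where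
  "cp_step q0 q r i j c' =
     (if c' = j then qtr q0 q r j i else if c' = i then 1 - qtr q0 q r j i else 0)"

definition cp_prob :: "(nat \<Rightarrow> real) \<Rightarrow> real \<Rightarrow> nat \<Rightarrow> nat \<Rightarrow> (nat \<Rightarrow> nat) \<Rightarrow> real" where
  "cp_prob q0 q r m c = cp_init q0 (c 1) * (\<Prod>i\<in>{2..m}. cp_step q0 q r i (c (i - 1)) (c i))"

definition paths :: "nat \<Rightarrow> (nat \<Rightarrow> nat) set" where
  "paths m = Pi\<^sub>E {1..m} (\<lambda>k. {0..k})"

text \<open>X_k is drawn fresh from J iff k = 1 or C_k = k; otherwise X_k = X_{k-1}.
  seg_start c l is the index of the fresh draw that X_l copies.\<close>
definition fresh :: "(nat \<Rightarrow> nat) \<Rightarrow> nat \<Rightarrow> bool" where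
  "fresh c k = (k = 1 \<or> c k = k)"

definition seg_start :: "(nat \<Rightarrow> nat) \<Rightarrow> nat \<Rightarrow> nat" where
  "seg_start c l = Max {k \<in> {1..l}. fresh c k}"

text \<open>Conditional density of Y_{1:n} at y_{1:n} given C_{1:n} = c_{1:n}
  (X's integrated out: one fresh J-draw per segment).\<close>
definition lik :: "'x measure \<Rightarrow> ('x \<Rightarrow> 'y \<Rightarrow> real) \<Rightarrow> (nat \<Rightarrow> 'y) \<Rightarrow> nat \<Rightarrow> (nat \<Rightarrow> nat) \<Rightarrow> real" where
  "lik J p y n c =
     (\<Prod>s\<in>{s \<in> {1..n}. fresh c s}.
        \<integral>x. (\<Prod>l\<in>{l \<in> {1..n}. seg_start c l = s}. p x (y l)) \<partial>J)"

text \<open>Joint density of (event E on C_{1:m}, Y_{1:n} = y_{1:n}) for m >= n, and the posterior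
  P(E | Y_{1:n} = y_{1:n}) as the ratio of densities (Bayes' rule).\<close>
definition joint :: "'x measure \<Rightarrow> ('x \<Rightarrow> 'y \<Rightarrow> real) \<Rightarrow> (nat \<Rightarrow> 'y) \<Rightarrow> (nat \<Rightarrow> real) \<Rightarrow> real \<Rightarrow> nat
    \<Rightarrow> nat \<Rightarrow> nat \<Rightarrow> ((nat \<Rightarrow> nat) \<Rightarrow> bool) \<Rightarrow> real" where
  "joint J p y q0 q r n m E =
     (\<Sum>c\<in>paths m. if E c then cp_prob q0 q r m c * lik J p y n c else 0)"

definition posterior :: "'x measure \<Rightarrow> ('x \<Rightarrow> 'y \<Rightarrow> real) \<Rightarrow> (nat \<Rightarrow> 'y) \<Rightarrow> (nat \<Rightarrow> real) \<Rightarrow> real \<Rightarrow> nat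
    \<Rightarrow> nat \<Rightarrow> nat \<Rightarrow> ((nat \<Rightarrow> nat) \<Rightarrow> bool) \<Rightarrow> real" where
  "posterior J p y q0 q r n m E =
     joint J p y q0 q r n m E / joint J p y q0 q r n n (\<lambda>_. True)"

text \<open>The event S = i, where tau = min{k > n. C_k = k} and S = tau - 1 - C_n
  (i.e. tau = i + C_n + 1).\<close>
definition S_is :: "nat \<Rightarrow> nat \<Rightarrow> (nat \<Rightarrow> nat) \<Rightarrow> bool" where
  "S_is n i c = (let t = i + c n + 1 in n < t \<and> c t = t \<and> (\<forall>k\<in>{n<..<t}. c k \<noteq> k))"

end

theory Submission
  imports Defs
begin

lemma NB_pmf:
  assumes "0 < q" "q \<le> 1" "1 \<le> r"
  shows "NB q r l = pmf (neg_binomial_pmf r q) l"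
  using assms by (subst pmf_neg_binomial) (auto simp: NB_def add.commute)

lemma NB_summable:
  assumes "0 < q" "q \<le> 1" "1 \<le> r"
  shows "summable (\<lambda>l. NB q r l)"
proof -
  note pmf_abs_summable[of "neg_binomial_pmf r q" UNIV]
  then have "summable (\<lambda>k. norm (pmf (neg_binomial_pmf r q) k))"
    by (simp add: abs_summable_on_nat_iff')
  then have "summable (pmf (neg_binomial_pmf r q))" by (rule summable_norm_cancel)
  then show ?thesis using NB_pmf[OF assms] by simp
qed

lemma NB_pos:
  assumes "0 < q" "q < 1"
  shows "0 < NB q r l"
proof -
  have "0 < real ((r - 1 + l) choose l)" by simp
  then show ?thesis using assms unfolding NB_def by (simp add: mult_pos_pos)
qed

lemma NBtail_split:
  assumes "0 < q" "q < 1" "1 \<le> r"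
  shows "NBtail q r k = NB q r k + NBtail q r (Suc k)"
proof -
  have s: "summable (\<lambda>l. NB q r (l + k))"
    using NB_summable[of q r] assms summable_ignore_initial_segment[of "NB q r" k] by simp
  have "(\<Sum>l. NB q r (Suc l + k)) = (\<Sum>l. NB q r (l + k)) - NB q r (0 + k)"
    by (rule suminf_split_head[OF s])
  then show ?thesis unfolding NBtail_def by simp
qed

lemma NBtail_pos:
  assumes "0 < q" "q < 1" "1 \<le> r"
  shows "0 < NBtail q r k"
proof -
  have s: "summable (\<lambda>l. NB q r (l + k))"
    using NB_summable[of q r] assms summable_ignore_initial_segment[of "NB q r" k] by simp
  show ?thesis unfolding NBtail_def
    by (rule suminf_pos[OF s]) (use NB_pos assms in auto)
qed

lemma telescope:
  fixes T :: "nat \<Rightarrow> real"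
  assumes "\<And>t. 0 < T t" "j \<le> n" "n \<le> b"
  shows "(\<Prod>k\<in>{n<..b}. T (k - j) / T (k - j - 1)) = T (b - j) / T (n - j)"
  using assms(3)
proof (induction b rule: dec_induct)
  case base
  then show ?case using assms(1)[of "n - j"] by simp
next
  case (step b)
  have e: "{n<..Suc b} = insert (Suc b) {n<..b}" using step.hyps by auto
  have nb: "n < Suc b" using step.hyps by simp
  have "Suc b - j - 1 = b - j" using step assms by simp
  then show ?case using step assms(1)[of "b - j"] assms(1)[of "n - j"]
    by (simp add: e)
qed

lemma lik_cong:
  assumes "\<And>k. k \<in> {1..n} \<Longrightarrow> c k = c' k"
  shows "lik J p y n c = lik J p y n c'"
proof -
  have fr: "fresh c k = fresh c' k" if "k \<in> {1..n}" for k
    using assms[OF that] unfolding fresh_def by simp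
  have ss: "seg_start c l = seg_start c' l" if "l \<in> {1..n}" for l
  proof -
    have "{k \<in> {1..l}. fresh c k} = {k \<in> {1..l}. fresh c' k}"
      using fr that by auto
    then show ?thesis unfolding seg_start_def by simp
  qed
  have A: "{s \<in> {1..n}. fresh c s} = {s \<in> {1..n}. fresh c' s}" using fr by auto
  have B: "{l \<in> {1..n}. seg_start c l = s} = {l \<in> {1..n}. seg_start c' l = s}" for s
    using ss by auto
  show ?thesis unfolding lik_def A B ..
qed

lemma finite_paths: "finite (paths m)"
  unfolding paths_def by (intro finite_PiE) auto

theorem mainTheorem14:
  fixes J :: "'x measure" and \<Psi> :: "'y measure" and p :: "'x \<Rightarrow> 'y \<Rightarrow> real"
    and y :: "nat \<Rightarrow> 'y" and q0 :: "nat \<Rightarrow> real" and q :: real and r n j i :: nat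
  assumes "prob_space J" and "sigma_finite_measure \<Psi>"
    and "(\<lambda>(x, w). p x w) \<in> borel_measurable (J \<Otimes>\<^sub>M \<Psi>)"
    and "\<forall>x w. 0 \<le> p x w"
    and "\<forall>x\<in>space J. (\<integral>\<^sup>+ w. ennreal (p x w) \<partial>\<Psi>) = 1"
    and "\<forall>l\<in>{1..n}. y l \<in> space \<Psi>"
    and "\<forall>k. 0 \<le> q0 k \<and> q0 k \<le> 1"
    and "0 < q" and "q < 1" and "1 \<le> r" and "1 \<le> n"
    and "\<forall>a b. 0 < a \<and> a \<le> b \<and> b \<le> n \<longrightarrow>
           integrable J (\<lambda>x. \<Prod>l\<in>{a..b}. p x (y l)) \<and>
           0 < (\<integral>x. (\<Prod>l\<in>{a..b}. p x (y l)) \<partial>J)"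
    and "0 < j" and "j \<le> n" and "n - j \<le> i"
  shows "posterior J p y q0 q r n (i + j + 1) (\<lambda>c. S_is n i c \<and> c n = j)
         = posterior J p y q0 q r n n (\<lambda>c. c n = j) * NB q r i / (\<Sum>l. NB q r (l + (n - j)))"
proof -
  note qq = \<open>0 < q\<close> \<open>q < 1\<close> \<open>1 \<le> r\<close>
  define m where "m = i + j + 1"
  define T where "T = NBtail q r"
  define K where "K = NB q r i / T (n - j)"
  define E where "E = (\<lambda>c. S_is n i c \<and> c n = j)"
  define f where "f = (\<lambda>c. cp_prob q0 q r m c * lik J p y n c)"
  define e where "e = (\<lambda>c k. if k \<in> {1..n} then (c::nat\<Rightarrow>nat) k else if k \<in> {n<..<m} then j
                         else if k = m then m else undefined)"
  define P where "P = {c \<in> paths n. c n = j}"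
  have nm: "n < m" using \<open>n - j \<le> i\<close> unfolding m_def by simp
  have Tpos: "\<And>t. 0 < T t" unfolding T_def using NBtail_pos[OF qq] by simp
  have n1: "n \<in> {1..n}" using \<open>1 \<le> n\<close> by simp
  have eP: "e c \<in> paths m" if "c \<in> P" for c
  proof -
    have "c \<in> Pi\<^sub>E {1..n} (\<lambda>k. {0..k})" using that unfolding P_def paths_def by simp
    then show ?thesis unfolding paths_def e_def using nm \<open>j \<le> n\<close>
      by (auto simp: PiE_iff extensional_def)
  qed
  have eE: "E (e c)" if "c \<in> P" for c
  proof -
    have "c n = j" using that unfolding P_def by simp
    then show ?thesis unfolding E_def S_is_def e_def Let_def using nm n1 \<open>j \<le> n\<close>
      by (auto simp: m_def)
  qed
  have inj: "inj_on e P"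
  proof
    fix c c' assume c: "c \<in> P" and c': "c' \<in> P" and eq: "e c = e c'"
    show "c = c'"
    proof (rule PiE_ext)
      show "c \<in> Pi\<^sub>E {1..n} (\<lambda>k. {0..k})" "c' \<in> Pi\<^sub>E {1..n} (\<lambda>k. {0..k})"
        using c c' unfolding P_def paths_def by auto
      fix k assume k: "k \<in> {1..n}"
      show "c k = c' k" using fun_cong[OF eq, of k] k unfolding e_def by simp
    qed
  qed
  have zero: "f c = 0" if c: "c \<in> {c \<in> paths m. E c}" "c \<notin> e ` P" for c
  proof (rule ccontr)
    assume nz: "f c \<noteq> 0"
    have cpm: "c \<in> Pi\<^sub>E {1..m} (\<lambda>k. {0..k})" using c unfolding paths_def by simp
    have cn: "c n = j" and cm: "c m = m" and cne: "\<And>k. k \<in> {n<..<m} \<Longrightarrow> c k \<noteq> k"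
      using c(1) unfolding E_def S_is_def Let_def m_def by auto
    have cpnz: "cp_prob q0 q r m c \<noteq> 0" using nz unfolding f_def by auto
    have stnz: "cp_step q0 q r k (c (k - 1)) (c k) \<noteq> 0" if "k \<in> {2..m}" for k
      using cpnz that unfolding cp_prob_def by auto
    have cj: "c k = j" if "n \<le> k" "k < m" for k
      using that
    proof (induction k rule: dec_induct)
      case base then show ?case using cn by simp
    next
      case (step k)
      have "Suc k \<in> {2..m}" using step n1 by auto
      from stnz[OF this] have "c (Suc k) = c k \<or> c (Suc k) = Suc k"
        unfolding cp_step_def by (auto split: if_splits)
      moreover have "c (Suc k) \<noteq> Suc k" using cne[of "Suc k"] step by auto
      ultimately show ?case using step by auto
    qed
    define c0 where "c0 = restrict c {1..n}"
    have "c0 \<in> P" unfolding P_def paths_def c0_def using cpm cn n1 nm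
      by (auto simp: PiE_iff)
    moreover have "e c0 = c"
    proof
      fix k
      show "e c0 k = c k"
      proof (cases "k \<in> {1..m}")
        case True
        then show ?thesis unfolding e_def c0_def using cj cm by auto
      next
        case False
        then have "c k = undefined" using cpm by (auto simp: PiE_iff extensional_def)
        then show ?thesis unfolding e_def c0_def using False nm by auto
      qed
    qed
    ultimately show False using c(2) by blast
  qed
  have fe: "f (e c) = cp_prob q0 q r n c * lik J p y n c * K" if "c \<in> P" for c
  proof -
    have cn: "c n = j" using that unfolding P_def by simp
    have lk: "lik J p y n (e c) = lik J p y n c"
      by (rule lik_cong) (simp add: e_def)
    define g where "g = (\<lambda>k. cp_step q0 q r k (e c (k - 1)) (e c k))"
    have split: "{2..m} = {2..n} \<union> insert m {n<..<m}" using nm n1 by auto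
    have fin: "finite ({2..n} \<union> {n<..<m})" by simp
    have p1: "prod g {2..n} = (\<Prod>k\<in>{2..n}. cp_step q0 q r k (c (k - 1)) (c k))"
      by (rule prod.cong) (auto simp: g_def e_def)
    have p2: "prod g {n<..<m} = (\<Prod>k\<in>{n<..<m}. T (k - j) / T (k - j - 1))"
    proof (rule prod.cong)
      fix k assume k: "k \<in> {n<..<m}"
      have "e c (k - 1) = j"
      proof (cases "k - 1 = n")
        case True then show ?thesis using cn n1 unfolding e_def by auto
      next
        case False then show ?thesis using k n1 unfolding e_def by auto
      qed
      moreover have "e c k = j" using k nm unfolding e_def by auto
      ultimately show "g k = T (k - j) / T (k - j - 1)"
        unfolding g_def cp_step_def qtr_def T_def using \<open>0 < j\<close> by simp
    qed simp
    have p2': "(\<Prod>k\<in>{n<..<m}. T (k - j) / T (k - j - 1)) = T i / T (n - j)"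
    proof -
      have "{n<..<m} = {n<..m - 1}" using nm by auto
      moreover have "m - 1 - j = i" unfolding m_def by simp
      ultimately show ?thesis using telescope[of T j n "m - 1", OF Tpos \<open>j \<le> n\<close>] nm by simp
    qed
    have p3: "g m = NB q r i / T i"
    proof -
      have "e c (m - 1) = j"
      proof (cases "m - 1 = n")
        case True then show ?thesis using cn n1 unfolding e_def by auto
      next
        case False then show ?thesis using nm n1 unfolding e_def by auto
      qed
      moreover have "e c m = m" using nm unfolding e_def by auto
      moreover have "m \<noteq> j" using nm \<open>j \<le> n\<close> by simp
      ultimately have "g m = 1 - T (m - j) / T (m - j - 1)"
        unfolding g_def cp_step_def qtr_def T_def using \<open>0 < j\<close> by simp
      moreover have "m - j = Suc i" "m - j - 1 = i" unfolding m_def by simp_all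
      moreover have "T i = NB q r i + T (Suc i)" unfolding T_def by (rule NBtail_split[OF qq])
      ultimately show ?thesis using Tpos[of i] by (simp add: field_simps)
    qed
    have "prod g {2..m} = prod g {2..n} * (g m * prod g {n<..<m})"
      unfolding split
      using nm by (subst prod.union_disjoint) (auto simp: prod.insert)
    also have "\<dots> = (\<Prod>k\<in>{2..n}. cp_step q0 q r k (c (k - 1)) (c k)) * K"
      unfolding p1 p2 p2' p3 K_def using Tpos[of i] by simp
    finally have pg: "prod g {2..m} = (\<Prod>k\<in>{2..n}. cp_step q0 q r k (c (k - 1)) (c k)) * K" .
    have "e c 1 = c 1" unfolding e_def using n1 by auto
    then have "cp_prob q0 q r m (e c) = cp_prob q0 q r n c * K"
      unfolding cp_prob_def using pg unfolding g_def by simp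
    then show ?thesis unfolding f_def lk by simp
  qed
  have "joint J p y q0 q r n m E = (\<Sum>c\<in>{c \<in> paths m. E c}. f c)"
    unfolding joint_def f_def by (rule sum.inter_filter[symmetric]) (rule finite_paths)
  also have "\<dots> = (\<Sum>c\<in>e ` P. f c)"
    by (rule sum.mono_neutral_right) (use finite_paths eP eE zero in auto)
  also have "\<dots> = (\<Sum>c\<in>P. f (e c))" by (rule sum.reindex_cong[OF inj refl refl])
  also have "\<dots> = (\<Sum>c\<in>P. cp_prob q0 q r n c * lik J p y n c) * K"
    unfolding sum_distrib_right using fe by simp
  also have "(\<Sum>c\<in>P. cp_prob q0 q r n c * lik J p y n c) = joint J p y q0 q r n n (\<lambda>c. c n = j)"
    unfolding joint_def P_def by (rule sum.inter_filter) (rule finite_paths)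
  finally have main: "joint J p y q0 q r n m E = joint J p y q0 q r n n (\<lambda>c. c n = j) * K" .
  show ?thesis
    unfolding posterior_def E_def[symmetric] m_def[symmetric] main
    unfolding K_def T_def NBtail_def by simp
qed

end
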